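(* Let $m$ be a positive integer. The distortion function of $F_{2m}$ in $G_{m,m}$ satisfies $\delta_{F_{2m}}^{G_{m,m}}(n)\simeq n^{m+1}$, and the distortion function of $F_{2m-1}$ in $G_{m,m-1}$ satisfies $\delta_{F_{2m-1}}^{G_{m,m-1}}(n)\simeq n^{m}$.
   Context: For integers $m\ge1$ and $0\le k\le m$, $G_{m,k}=\langle s_1,\dots,s_{m+k+1}\mid [s_i,s_{i+1}]=1\ (1\le i\le m);\ s_{m+j+1}^{-1}s_js_{m+j+1}=s_{m+j}\ (1\le j\le k)\rangle$. Let $A_i=s_{i+1}^{-1}s_i$ for $1\le i\le m$ and $B_j=s_{m+j+1}^{-1}s_j$ for $1\le j\le k$; these generate a free subgroup $F_{m+k}$ of rank $m+k$, and $G_{m,k}\cong F_{m+k}\rtimes\mathbb{Z}$. Distortion is taken with respect to the generating sets $\{A_i,B_j\}$ of $F_{m+k}$ and $\{s_i\}$ of $G_{m,k}$: $\delta_H^G(n)=\max\{d_H(1,w):w\in H,d_G(1,w)\le n\}$; $f\simeq g$ means $f\preceq g\preceq f$ where $f\preceq g$ iff $f(n)\le Cg(Cn+C)+Cn+C$ for some $C>0$. *)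

theory Defs
  imports Main
begin

text \<open>Letters: (i, e) with e = False meaning the generator x_i and e = True its inverse.\<close>
type_synonym letter = "nat \<times> bool"

definition inv_letter :: "letter \<Rightarrow> letter" where
  "inv_letter x = (fst x, \<not> snd x)"

definition inv_word :: "letter list \<Rightarrow> letter list" where
  "inv_word w = rev (map inv_letter w)"

definition gen :: "nat \<Rightarrow> letter" where "gen i = (i, False)"
definition ginv :: "nat \<Rightarrow> letter" where "ginv i = (i, True)"

definition relators :: "nat \<Rightarrow> nat \<Rightarrow> letter list set" where
  "relators m k =
     {[ginv i, ginv (i+1), gen i, gen (i+1)] | i. 1 \<le> i \<and> i \<le> m} \<union>
     {[ginv (m+j+1), gen j, gen (m+j+1), ginv (m+j)] | j. 1 \<le> j \<and> j \<le> k}"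

definition valid_G :: "nat \<Rightarrow> nat \<Rightarrow> letter list \<Rightarrow> bool" where
  "valid_G m k w \<longleftrightarrow> (\<forall>x\<in>set w. 1 \<le> fst x \<and> fst x \<le> m + k + 1)"

inductive eqG :: "nat \<Rightarrow> nat \<Rightarrow> letter list \<Rightarrow> letter list \<Rightarrow> bool" for m k where
  refl: "eqG m k w w"
| sym: "eqG m k u v \<Longrightarrow> eqG m k v u"
| trans: "eqG m k u v \<Longrightarrow> eqG m k v w \<Longrightarrow> eqG m k u w"
| cancel: "eqG m k (u @ [x, inv_letter x] @ v) (u @ v)"
| rel: "r \<in> relators m k \<Longrightarrow> eqG m k (u @ r @ v) (u @ v)"

text \<open>Generators of the subgroup F_{m+k}: letter index i \<in> {1..m} stands for A_i,
  index m+j (1 \<le> j \<le> k) stands for B_j.\<close>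
definition valid_H :: "nat \<Rightarrow> nat \<Rightarrow> letter list \<Rightarrow> bool" where
  "valid_H m k w \<longleftrightarrow> (\<forall>x\<in>set w. 1 \<le> fst x \<and> fst x \<le> m + k)"

definition subgen :: "nat \<Rightarrow> nat \<Rightarrow> letter list" where
  "subgen m i = (if i \<le> m then [ginv (i+1), gen i] else [ginv (i+1), gen (i - m)])"

definition subst_letter :: "nat \<Rightarrow> letter \<Rightarrow> letter list" where
  "subst_letter m x = (if snd x then inv_word (subgen m (fst x)) else subgen m (fst x))"

definition subst :: "nat \<Rightarrow> letter list \<Rightarrow> letter list" where
  "subst m w = concat (map (subst_letter m) w)"

definition dG :: "nat \<Rightarrow> nat \<Rightarrow> letter list \<Rightarrow> nat" where
  "dG m k w = (LEAST n. \<exists>u. valid_G m k u \<and> length u = n \<and> eqG m k u w)"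

definition inH :: "nat \<Rightarrow> nat \<Rightarrow> letter list \<Rightarrow> bool" where
  "inH m k w \<longleftrightarrow> (\<exists>h. valid_H m k h \<and> eqG m k (subst m h) w)"

definition dH :: "nat \<Rightarrow> nat \<Rightarrow> letter list \<Rightarrow> nat" where
  "dH m k w = (LEAST n. \<exists>h. valid_H m k h \<and> length h = n \<and> eqG m k (subst m h) w)"

definition distortion :: "nat \<Rightarrow> nat \<Rightarrow> nat \<Rightarrow> nat" where
  "distortion m k n = Sup {dH m k w | w. valid_G m k w \<and> inH m k w \<and> dG m k w \<le> n}"

definition preceq :: "(nat \<Rightarrow> nat) \<Rightarrow> (nat \<Rightarrow> nat) \<Rightarrow> bool" (infix "\<preceq>\<^sub>d" 50) where
  "f \<preceq>\<^sub>d g \<longleftrightarrow> (\<exists>C>0. \<forall>n. f n \<le> C * g (C * n + C) + C * n + C)"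

definition simeq :: "(nat \<Rightarrow> nat) \<Rightarrow> (nat \<Rightarrow> nat) \<Rightarrow> bool" (infix "\<simeq>\<^sub>d" 50) where
  "f \<simeq>\<^sub>d g \<longleftrightarrow> f \<preceq>\<^sub>d g \<and> g \<preceq>\<^sub>d f"

end

theory Submission imports Defs Complex_Main begin

lemma inv_letter_inv[simp]: "inv_letter (inv_letter x) = x"
  by (simp add: inv_letter_def)
lemma inv_word_append[simp]: "inv_word (u @ v) = inv_word v @ inv_word u"
  by (simp add: inv_word_def)
lemma inv_word_inv[simp]: "inv_word (inv_word w) = w"
  by (simp add: inv_word_def rev_map comp_def)
lemma inv_word_Nil[simp]: "inv_word [] = []" by (simp add: inv_word_def)
lemma inv_word_Cons[simp]: "inv_word (x # w) = inv_word w @ [inv_letter x]"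
  by (simp add: inv_word_def)
lemma length_inv_word[simp]: "length (inv_word w) = length w" by (simp add: inv_word_def)
lemma set_inv_word: "x \<in> set (inv_word w) \<Longrightarrow> \<exists>y\<in>set w. x = inv_letter y"
  by (auto simp add: inv_word_def)
lemma fst_inv_letter[simp]: "fst (inv_letter x) = fst x" by (simp add: inv_letter_def)

definition wpow :: "letter list \<Rightarrow> int \<Rightarrow> letter list" where
  "wpow w p = (if 0 \<le> p then concat (replicate (nat p) w) else concat (replicate (nat (-p)) (inv_word w)))"

lemma concat_rep_snoc: "concat (replicate n w) @ w = w @ concat (replicate n w)"
  by (induction n) auto

lemma inv_concat_rep: "inv_word (concat (replicate n w)) = concat (replicate n (inv_word w))"
  by (induction n) (auto simp: concat_rep_snoc)

lemma wpow_0[simp]: "wpow w 0 = []" by (simp add: wpow_def)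
lemma wpow_1[simp]: "wpow w 1 = w" by (simp add: wpow_def)
lemma wpow_m1[simp]: "wpow w (-1) = inv_word w" by (simp add: wpow_def)
lemma inv_wpow: "inv_word (wpow w p) = wpow w (-p)"
  by (auto simp add: wpow_def inv_concat_rep)
lemma wpow_inv: "wpow (inv_word w) p = wpow w (-p)"
  by (auto simp add: wpow_def)
lemma length_wpow: "length (wpow w p) = nat \<bar>p\<bar> * length w"
  by (auto simp add: wpow_def length_concat sum_list_replicate)
lemma set_wpow: "x \<in> set (wpow w p) \<Longrightarrow> x \<in> set w \<or> (\<exists>y\<in>set w. x = inv_letter y)"
  by (auto simp add: wpow_def dest: set_inv_word split: if_splits)
lemma wpow_nat: "wpow w (int n) = concat (replicate n w)" by (simp add: wpow_def)

lemma choice_le: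
  fixes n :: nat
  assumes "\<And>j. j \<le> n \<Longrightarrow> \<exists>K::nat. \<forall>p. P j p K"
    and "\<And>j p K K'. P j p K \<Longrightarrow> K \<le> K' \<Longrightarrow> P j p K'"
  shows "\<exists>K. \<forall>j\<le>n. \<forall>p. P j p K"
  using assms(1)
proof (induction n)
  case 0
  then obtain K where "\<forall>p. P 0 p K" by blast
  then show ?case by auto
next
  case (Suc n)
  then obtain K1 where K1: "\<forall>j\<le>n. \<forall>p. P j p K1" by auto
  obtain K2 where K2: "\<forall>p. P (Suc n) p K2" using Suc.prems by blast
  have "\<forall>j\<le>Suc n. \<forall>p. P j p (max K1 K2)"
  proof (intro allI impI)
    fix j p assume "j \<le> Suc n"
    then consider "j \<le> n" | "j = Suc n" by linarith
    then show "P j p (max K1 K2)"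
    proof cases
      case 1 then show ?thesis using K1 assms(2)[of j p K1 "max K1 K2"] by simp
    next
      case 2 then show ?thesis using K2 assms(2)[of j p K2 "max K1 K2"] by simp
    qed
  qed
  then show ?case by blast
qed

definition es :: "letter list \<Rightarrow> int" where
  "es w = sum_list (map (\<lambda>x. if snd x then -1 else 1) w)"

lemma es_append[simp]: "es (u @ v) = es u + es v" by (simp add: es_def)
lemma es_Nil[simp]: "es [] = 0" by (simp add: es_def)
lemma es_Cons: "es (x # w) = (if snd x then -1 else 1) + es w" by (simp add: es_def)
lemma es_inv: "es (inv_word w) = - es w"
  by (induction w) (auto simp: es_Cons inv_letter_def)
lemma es_gen[simp]: "es [gen i] = 1" "es [ginv i] = -1" by (simp_all add: es_def gen_def ginv_def)
lemma es_wpow: "es (wpow w p) = p * es w"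
proof -
  have "es (concat (replicate n w)) = int n * es w" for n w by (induction n) (auto simp: algebra_simps)
  then show ?thesis by (auto simp: wpow_def es_inv)
qed


context fixes m k :: nat begin

abbreviation eqw (infix "\<approx>" 50) where "u \<approx> v \<equiv> eqG m k u v"

lemma eq_refl[simp, intro]: "u \<approx> u" by (rule eqG.refl)
lemma eq_sym[sym]: "u \<approx> v \<Longrightarrow> v \<approx> u" by (rule eqG.sym)
lemma eq_trans[trans]: "u \<approx> v \<Longrightarrow> v \<approx> w \<Longrightarrow> u \<approx> w" by (rule eqG.trans)

lemma eq_cong: "u \<approx> v \<Longrightarrow> a @ u @ b \<approx> a @ v @ b"
proof (induction rule: eqG.induct)
  case (refl w) then show ?case by simp
next
  case (sym u v) then show ?case by (metis eqG.sym)
next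
  case (trans u v w) then show ?case by (metis eqG.trans)
next
  case (cancel u x v)
  have "eqG m k ((a @ u) @ [x, inv_letter x] @ (v @ b)) ((a @ u) @ (v @ b))" by (rule eqG.cancel)
  then show ?case by simp
next
  case (rel r u v)
  have "eqG m k ((a @ u) @ r @ (v @ b)) ((a @ u) @ (v @ b))" using rel by (rule eqG.rel)
  then show ?case by simp
qed

lemma eq_app: "u \<approx> u' \<Longrightarrow> v \<approx> v' \<Longrightarrow> u @ v \<approx> u' @ v'"
  by (metis append.right_neutral append_Nil eqG.trans eq_cong)

lemma eq_appL: "v \<approx> v' \<Longrightarrow> u @ v \<approx> u @ v'" by (simp add: eq_app)
lemma eq_appR: "u \<approx> u' \<Longrightarrow> u @ v \<approx> u' @ v" by (simp add: eq_app)

lemma eq_cancel1: "[x, inv_letter x] \<approx> []"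
  using eqG.cancel[of m k "[]" x "[]"] by simp
lemma eq_cancel2: "[inv_letter x, x] \<approx> []"
  using eq_cancel1[of "inv_letter x"] by simp

lemma eq_rinv: "w @ inv_word w \<approx> []"
proof (induction w)
  case Nil then show ?case by simp
next
  case (Cons x w)
  have "(x # w) @ inv_word (x # w) = [x] @ (w @ inv_word w) @ [inv_letter x]" by simp
  also have "\<dots> \<approx> [x] @ [] @ [inv_letter x]" by (rule eq_cong[OF Cons])
  also have "\<dots> \<approx> []" using eq_cancel1 by simp
  finally show ?case .
qed

lemma eq_linv: "inv_word w @ w \<approx> []"
  using eq_rinv[of "inv_word w"] by simp

lemma eq_rel: "r \<in> relators m k \<Longrightarrow> r \<approx> []"
  using eqG.rel[of r m k "[]" "[]"] by simp

lemma eq_inv: "u \<approx> v \<Longrightarrow> inv_word u \<approx> inv_word v"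
proof (induction rule: eqG.induct)
  case (refl w) then show ?case by simp
next
  case (sym u v) then show ?case by (metis eqG.sym)
next
  case (trans u v w) then show ?case by (metis eqG.trans)
next
  case (cancel u x v)
  have "inv_word v @ [x, inv_letter x] @ inv_word u \<approx> inv_word v @ inv_word u" by (rule eqG.cancel)
  then show ?case by simp
next
  case (rel r u v)
  have "inv_word r \<approx> inv_word r @ r" using eq_appL[OF eq_rel[OF rel]] by (simp add: eq_sym)
  also have "\<dots> \<approx> []" by (rule eq_linv)
  finally have "inv_word v @ inv_word r @ inv_word u \<approx> inv_word v @ [] @ inv_word u"
    by (rule eq_cong)
  then show ?case by simp
qed

lemma eq_move_r: "u @ v \<approx> w \<Longrightarrow> u \<approx> w @ inv_word v"
proof -
  assume h: "u @ v \<approx> w"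
  have "u \<approx> u @ (v @ inv_word v)" using eq_appL[OF eq_rinv[of v], of u] by (simp add: eq_sym)
  also have "\<dots> = (u @ v) @ inv_word v" by simp
  also have "\<dots> \<approx> w @ inv_word v" by (rule eq_appR[OF h])
  finally show ?thesis .
qed

lemma eq_move_l: "v @ u \<approx> w \<Longrightarrow> u \<approx> inv_word v @ w"
proof -
  assume h: "v @ u \<approx> w"
  have "u \<approx> (inv_word v @ v) @ u" using eq_appR[OF eq_linv[of v], of u] by (simp add: eq_sym)
  also have "\<dots> = inv_word v @ (v @ u)" by simp
  also have "\<dots> \<approx> inv_word v @ w" by (rule eq_appL[OF h])
  finally show ?thesis .
qed

lemma eq_ins: "a @ b \<approx> a @ v @ inv_word v @ b"
  using eq_cong[OF eq_rinv[of v], of a b] by (simp add: eq_sym)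


lemma wpow_succ: "wpow w (p+1) \<approx> wpow w p @ w"
proof (cases "0 \<le> p")
  case True
  then have "wpow w (p+1) = concat (replicate (Suc (nat p)) w)"
    by (simp add: wpow_def nat_add_distrib)
  also have "\<dots> = wpow w p @ w" using True by (simp add: wpow_def concat_rep_snoc)
  finally show ?thesis by simp
next
  case False
  define n where "n = nat (-p-1)"
  have n: "p = - int n - 1" using False by (simp add: n_def)
  have a: "wpow w (p+1) = concat (replicate n (inv_word w))"
    using n by (auto simp add: wpow_def)
  have b: "wpow w p = concat (replicate n (inv_word w)) @ inv_word w"
    using n by (simp add: wpow_def nat_add_distrib concat_rep_snoc)
  have "wpow w p @ w = concat (replicate n (inv_word w)) @ (inv_word w @ w)" by (simp add: b)
  also have "\<dots> \<approx> concat (replicate n (inv_word w)) @ []" by (rule eq_appL[OF eq_linv])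
  finally show ?thesis by (simp add: a eq_sym)
qed

lemma wpow_pred: "wpow w (p-1) \<approx> wpow w p @ inv_word w"
proof -
  have "wpow w p \<approx> wpow w (p-1) @ w" using wpow_succ[of w "p-1"] by simp
  then have "wpow w p @ inv_word w \<approx> wpow w (p-1) @ (w @ inv_word w)"
    by (metis append.assoc eq_appR)
  also have "\<dots> \<approx> wpow w (p-1) @ []" by (rule eq_appL[OF eq_rinv])
  finally show ?thesis by (simp add: eq_sym)
qed

lemma wpow_add: "wpow w p @ wpow w q \<approx> wpow w (p+q)"
proof (induction q rule: int_induct[where k=0])
  case base then show ?case by simp
next
  case (step1 i)
  have "wpow w p @ wpow w (i+1) \<approx> wpow w p @ (wpow w i @ w)" by (rule eq_appL[OF wpow_succ])
  also have "\<dots> = (wpow w p @ wpow w i) @ w" by simp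
  also have "\<dots> \<approx> wpow w (p+i) @ w" by (rule eq_appR[OF step1.IH])
  also have "\<dots> \<approx> wpow w (p+i+1)" by (rule eq_sym[OF wpow_succ])
  finally show ?case by (simp add: add.assoc)
next
  case (step2 i)
  have "wpow w p @ wpow w (i-1) \<approx> wpow w p @ (wpow w i @ inv_word w)" by (rule eq_appL[OF wpow_pred])
  also have "\<dots> = (wpow w p @ wpow w i) @ inv_word w" by simp
  also have "\<dots> \<approx> wpow w (p+i) @ inv_word w" by (rule eq_appR[OF step2.IH])
  also have "\<dots> \<approx> wpow w (p+i-1)" by (rule eq_sym[OF wpow_pred])
  finally show ?case by (simp add: algebra_simps)
qed

lemma conj_step_inv: "b @ x \<approx> y @ b \<Longrightarrow> b @ inv_word x \<approx> inv_word y @ b"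
proof -
  assume h: "b @ x \<approx> y @ b"
  have "b @ inv_word x \<approx> inv_word y @ (y @ b) @ inv_word x"
    using eq_ins[of "[]" "b @ inv_word x" "inv_word y"] by (simp add: eq_sym)
  also have "\<dots> \<approx> inv_word y @ (b @ x) @ inv_word x" by (rule eq_cong[OF eq_sym[OF h]])
  also have "\<dots> = (inv_word y @ b) @ (x @ inv_word x) @ []" by simp
  also have "\<dots> \<approx> (inv_word y @ b) @ [] @ []" by (rule eq_cong[OF eq_rinv])
  finally show ?thesis by simp
qed

lemma conj_pow: "b @ x \<approx> y @ b \<Longrightarrow> b @ wpow x p \<approx> wpow y p @ b"
proof (induction p rule: int_induct[where k=0])
  case base then show ?case by simp
next
  case (step1 i)
  have "b @ wpow x (i+1) \<approx> b @ (wpow x i @ x)" by (rule eq_appL[OF wpow_succ])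
  also have "\<dots> = (b @ wpow x i) @ x" by simp
  also have "\<dots> \<approx> (wpow y i @ b) @ x" by (rule eq_appR[OF step1.IH[OF step1.prems]])
  also have "\<dots> = wpow y i @ (b @ x)" by simp
  also have "\<dots> \<approx> wpow y i @ (y @ b)" by (rule eq_appL[OF step1.prems])
  also have "\<dots> = (wpow y i @ y) @ b" by simp
  also have "\<dots> \<approx> wpow y (i+1) @ b" by (rule eq_appR[OF eq_sym[OF wpow_succ]])
  finally show ?case .
next
  case (step2 i)
  note h = conj_step_inv[OF step2.prems]
  have "b @ wpow x (i-1) \<approx> b @ (wpow x i @ inv_word x)" by (rule eq_appL[OF wpow_pred])
  also have "\<dots> = (b @ wpow x i) @ inv_word x" by simp
  also have "\<dots> \<approx> (wpow y i @ b) @ inv_word x" by (rule eq_appR[OF step2.IH[OF step2.prems]])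
  also have "\<dots> = wpow y i @ (b @ inv_word x)" by simp
  also have "\<dots> \<approx> wpow y i @ (inv_word y @ b)" by (rule eq_appL[OF h])
  also have "\<dots> = (wpow y i @ inv_word y) @ b" by simp
  also have "\<dots> \<approx> wpow y (i-1) @ b" by (rule eq_appR[OF eq_sym[OF wpow_pred]])
  finally show ?case .
qed

lemma comm_pow: "a @ b \<approx> b @ a \<Longrightarrow> wpow a p @ wpow b q \<approx> wpow b q @ wpow a p"
proof -
  assume h: "a @ b \<approx> b @ a"
  have h1: "wpow a p @ b \<approx> b @ wpow a p" using conj_pow[of b a a p] h by (simp add: eq_sym)
  show ?thesis using conj_pow[OF h1, of q] by simp
qed

lemma pow_prod: "a @ b \<approx> b @ a \<Longrightarrow> wpow (a @ b) p \<approx> wpow a p @ wpow b p"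
proof (induction p rule: int_induct[where k=0])
  case base then show ?case by simp
next
  case (step1 i)
  have c: "wpow b i @ a \<approx> a @ wpow b i" using comm_pow[OF step1.prems, of 1 i] by (simp add: eq_sym)
  have "wpow (a @ b) (i+1) \<approx> wpow (a @ b) i @ (a @ b)" by (rule wpow_succ)
  also have "\<dots> \<approx> (wpow a i @ wpow b i) @ (a @ b)" by (rule eq_appR[OF step1.IH[OF step1.prems]])
  also have "\<dots> = wpow a i @ (wpow b i @ a) @ b" by simp
  also have "\<dots> \<approx> wpow a i @ (a @ wpow b i) @ b" by (rule eq_cong[OF c])
  also have "\<dots> = (wpow a i @ a) @ (wpow b i @ b)" by simp
  also have "\<dots> \<approx> wpow a (i+1) @ wpow b (i+1)" by (rule eq_app[OF eq_sym[OF wpow_succ] eq_sym[OF wpow_succ]])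
  finally show ?case .
next
  case (step2 i)
  have c: "wpow b i @ inv_word a \<approx> inv_word a @ wpow b i" using comm_pow[OF step2.prems, of "-1" i] by (simp add: eq_sym)
  have "wpow (a @ b) (i-1) \<approx> wpow (a @ b) i @ inv_word (a @ b)" by (rule wpow_pred)
  also have "\<dots> \<approx> (wpow a i @ wpow b i) @ (inv_word b @ inv_word a)" using eq_appR[OF step2.IH[OF step2.prems]] by simp
  also have "\<dots> = wpow a i @ (wpow b i @ inv_word b) @ inv_word a" by simp
  also have "\<dots> \<approx> wpow a i @ (wpow b (i-1)) @ inv_word a" by (rule eq_cong[OF eq_sym[OF wpow_pred]])
  also have "\<dots> = wpow a i @ (wpow b (i-1) @ inv_word a) @ []" by simp
  also have "\<dots> \<approx> wpow a i @ (inv_word a @ wpow b (i-1)) @ []" 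
    using comm_pow[OF step2.prems, of "-1" "i-1"] by (intro eq_cong) (simp add: eq_sym)
  also have "\<dots> = (wpow a i @ inv_word a) @ wpow b (i-1)" by simp
  also have "\<dots> \<approx> wpow a (i-1) @ wpow b (i-1)" by (rule eq_appR[OF eq_sym[OF wpow_pred]])
  finally show ?case .
qed


lemma rel_split: "a @ b \<approx> [] \<Longrightarrow> a \<approx> inv_word b"
proof -
  assume h: "a @ b \<approx> []"
  have "a \<approx> a @ (b @ inv_word b)" using eq_appL[OF eq_rinv[of b], of a] by (simp add: eq_sym)
  also have "\<dots> = (a @ b) @ inv_word b" by simp
  also have "\<dots> \<approx> [] @ inv_word b" by (rule eq_appR[OF h])
  finally show ?thesis by simp
qed

lemma gen_simps[simp]: "inv_letter (gen i) = ginv i" "inv_letter (ginv i) = gen i"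
  "inv_word [gen i] = [ginv i]" "inv_word [ginv i] = [gen i]"
  by (simp_all add: gen_def ginv_def inv_letter_def)

abbreviation S :: "nat \<Rightarrow> int \<Rightarrow> letter list" where "S i p \<equiv> wpow [gen i] p"

lemma S_neg1[simp]: "S i (-1) = [ginv i]" by simp

lemma comm_rel: "1 \<le> i \<Longrightarrow> i \<le> m \<Longrightarrow> [gen i, gen (i+1)] \<approx> [gen (i+1), gen i]"
proof -
  assume "1 \<le> i" "i \<le> m"
  then have r: "[ginv i, ginv (i+1)] @ [gen i, gen (i+1)] \<approx> []"
    by (intro eq_rel) (auto simp: relators_def)
  have "[ginv i, ginv (i+1)] \<approx> [ginv (i+1), ginv i]" using rel_split[OF r] by simp
  from eq_inv[OF this] show ?thesis by (simp add: eq_sym)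
qed

lemma conj_rel: "1 \<le> j \<Longrightarrow> j \<le> k \<Longrightarrow> [ginv (m+j+1)] @ [gen j] \<approx> [gen (m+j)] @ [ginv (m+j+1)]"
proof -
  assume "1 \<le> j" "j \<le> k"
  then have r: "[ginv (m+j+1), gen j] @ [gen (m+j+1), ginv (m+j)] \<approx> []"
    by (intro eq_rel) (auto simp: relators_def)
  show ?thesis using rel_split[OF r] by simp
qed

lemma comm_rel': "1 \<le> i \<Longrightarrow> i \<le> m \<Longrightarrow> [gen i] @ [ginv (i+1)] \<approx> [ginv (i+1)] @ [gen i]"
proof -
  assume a: "1 \<le> i" "i \<le> m"
  have "[gen i] @ [gen (i+1)] \<approx> [gen (i+1)] @ [gen i]" using comm_rel[OF a] by simp
  from comm_pow[OF this, of 1 "-1"] show ?thesis by simp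
qed

definition hrep :: "letter list \<Rightarrow> nat \<Rightarrow> bool" where
  "hrep w L \<longleftrightarrow> (\<exists>h. valid_H m k h \<and> length h \<le> L \<and> subst m h \<approx> w)"

lemma subst_append[simp]: "subst m (u @ v) = subst m u @ subst m v" by (simp add: subst_def)
lemma subst_Nil[simp]: "subst m [] = []" by (simp add: subst_def)
lemma subst_Cons: "subst m (x # h) = subst_letter m x @ subst m h" by (simp add: subst_def)
lemma subst_letter_inv: "subst_letter m (inv_letter x) = inv_word (subst_letter m x)"
  by (simp add: subst_letter_def inv_letter_def)
lemma subst_inv: "subst m (inv_word h) = inv_word (subst m h)"
  by (induction h) (simp_all add: subst_Cons subst_letter_inv)
lemma valid_H_append[simp]: "valid_H m k (u @ v) \<longleftrightarrow> valid_H m k u \<and> valid_H m k v"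
  by (auto simp: valid_H_def)
lemma valid_H_inv: "valid_H m k h \<Longrightarrow> valid_H m k (inv_word h)"
  by (auto simp: valid_H_def dest!: set_inv_word)

lemma hrep_mono: "hrep w L \<Longrightarrow> L \<le> L' \<Longrightarrow> hrep w L'"
  unfolding hrep_def by (meson le_trans)
lemma hrep_eq: "hrep w L \<Longrightarrow> w \<approx> w' \<Longrightarrow> hrep w' L"
  unfolding hrep_def by (meson eq_trans)
lemma hrep_app: "hrep u L1 \<Longrightarrow> hrep v L2 \<Longrightarrow> hrep (u @ v) (L1 + L2)"
  unfolding hrep_def by (metis add_mono eq_app length_append subst_append valid_H_append)
lemma hrep_inv: "hrep u L \<Longrightarrow> hrep (inv_word u) L"
  unfolding hrep_def by (metis eq_inv length_inv_word subst_inv valid_H_inv)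
lemma hrep_Nil: "hrep [] 0"
  unfolding hrep_def by (rule exI[of _ "[]"]) (simp add: valid_H_def)
lemma hrep_letter: "1 \<le> i \<Longrightarrow> i \<le> m + k \<Longrightarrow> hrep (subgen m i) 1"
  unfolding hrep_def
  by (rule exI[of _ "[(i,False)]"]) (simp add: valid_H_def subst_def subst_letter_def)

lemma subst_wpow: "subst m (wpow h p) = wpow (subst m h) p"
proof -
  have "subst m (concat (replicate n h)) = concat (replicate n (subst m h))" for n h
    by (induction n) simp_all
  then show ?thesis by (simp add: wpow_def subst_inv)
qed

lemma hrep_wpow: "hrep u L \<Longrightarrow> hrep (wpow u p) (nat \<bar>p\<bar> * L)"
  unfolding hrep_def
proof (elim exE conjE)
  fix h assume h: "valid_H m k h" "length h \<le> L" "subst m h \<approx> u"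
  have v: "valid_H m k (wpow h p)" using h(1)
    by (auto simp: valid_H_def dest!: set_wpow)
  have e: "subst m (wpow h p) \<approx> wpow u p"
  proof -
    have "wpow w p \<approx> wpow w' p" if "w \<approx> w'" for w w'
    proof -
      have "concat (replicate n w) \<approx> concat (replicate n w')" if "w \<approx> w'" for n w w'
        using that by (induction n) (simp_all add: eq_app)
      then show ?thesis using that eq_inv[OF that] by (simp add: wpow_def)
    qed
    then show ?thesis using h(3) by (simp add: subst_wpow)
  qed
  show "\<exists>h. valid_H m k h \<and> length h \<le> nat \<bar>p\<bar> * L \<and> subst m h \<approx> wpow u p"
    using v e h(2) by (intro exI[of _ "wpow h p"]) (simp add: length_wpow)
qed

abbreviation E :: "nat \<Rightarrow> int \<Rightarrow> letter list" where "E i p \<equiv> S 1 p @ S i (-p)"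

lemma A_pow: "1 \<le> l \<Longrightarrow> l \<le> m \<Longrightarrow> S l p @ S (l+1) (-p) \<approx> wpow (subgen m l) p"
proof -
  assume a: "1 \<le> l" "l \<le> m"
  have sg: "subgen m l = [ginv (l+1)] @ [gen l]" using a by (simp add: subgen_def)
  have c: "[ginv (l+1)] @ [gen l] \<approx> [gen l] @ [ginv (l+1)]" using comm_rel'[OF a] by (simp add: eq_sym)
  have "wpow (subgen m l) p \<approx> wpow [ginv (l+1)] p @ wpow [gen l] p" unfolding sg by (rule pow_prod[OF c])
  also have "\<dots> \<approx> wpow [gen l] p @ wpow [ginv (l+1)] p" by (rule comm_pow[OF c])
  also have "wpow [ginv (l+1)] p = S (l+1) (-p)" using wpow_inv[of "[gen (l+1)]" p] by simp
  finally show ?thesis by (simp add: eq_sym)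
qed

lemma E_ins: "S a p @ S c (-p) \<approx> S a p @ S b (-p) @ S b p @ S c (-p)"
  using eq_ins[of "S a p" "S c (-p)" "S b (-p)"] by (simp add: inv_wpow)

lemma E_low: "1 \<le> i \<Longrightarrow> i \<le> m + 1 \<Longrightarrow> hrep (E i p) ((i - 1) * nat \<bar>p\<bar>)"
proof (induction i rule: nat_induct_at_least)
  case base
  have "E 1 p \<approx> []" using wpow_add[of "[gen 1]" p "-p"] by simp
  then show ?case using hrep_eq[OF hrep_Nil] eq_sym by fastforce
next
  case (Suc i)
  have IH: "hrep (E i p) ((i - 1) * nat \<bar>p\<bar>)" using Suc by simp
  have l: "hrep (wpow (subgen m i) p) (nat \<bar>p\<bar> * 1)"
    using Suc by (intro hrep_wpow hrep_letter) auto
  have "hrep (E i p @ (S i p @ S (i+1) (-p))) ((i - 1) * nat \<bar>p\<bar> + nat \<bar>p\<bar>)"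
    using hrep_app[OF IH hrep_eq[OF l eq_sym[OF A_pow]]] Suc by simp
  then have "hrep (E (Suc i) p) ((i - 1) * nat \<bar>p\<bar> + nat \<bar>p\<bar>)"
    using E_ins[of 1 p "Suc i" i] by (auto elim: hrep_eq simp: eq_sym)
  moreover have "(i - 1) * nat \<bar>p\<bar> + nat \<bar>p\<bar> = (Suc i - 1) * nat \<bar>p\<bar>" using Suc by (cases i) auto
  ultimately show ?case by simp
qed


context assumes km: "k \<le> m"
begin

abbreviation V :: "nat \<Rightarrow> int \<Rightarrow> letter list" where "V j p \<equiv> S j p @ S (m+j+1) (-p)"
abbreviation W :: "nat \<Rightarrow> int \<Rightarrow> letter list" where "W j p \<equiv> S j p @ S (m+j) (-p)"

lemma subgen_B: "1 \<le> j \<Longrightarrow> subgen m (m+j) = [ginv (m+j+1), gen j]"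
  by (simp add: subgen_def)

lemma V_rec: "1 \<le> j \<Longrightarrow> j \<le> k \<Longrightarrow> V j p \<approx> W j p @ subgen m (m+j) @ V j (p-1)"
proof -
  assume j: "1 \<le> j" "j \<le> k"
  define a where "a = j"
  define b where "b = m+j+1"
  define c where "c = m+j"
  have cr: "[ginv b] @ S a p \<approx> S c p @ [ginv b]"
    unfolding a_def b_def c_def by (rule conj_pow[OF conj_rel[OF j]])
  have s1: "[gen a] @ S a (p-1) \<approx> S a p"
    using wpow_add[of "[gen a]" 1 "p-1"] by simp
  have s2: "[ginv b] @ S b (-(p-1)) \<approx> S b (-p)"
    using wpow_add[of "[gen b]" "-1" "-(p-1)"] by simp
  have s3: "S c (-p) @ S c p \<approx> []"
    using wpow_add[of "[gen c]" "-p" "p"] by simp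
  have "W j p @ subgen m (m+j) @ V j (p-1) = S a p @ S c (-p) @ [ginv b] @ ([gen a] @ S a (p-1)) @ S b (-(p-1))"
    using j by (simp add: subgen_B a_def b_def c_def)
  also have "\<dots> \<approx> (S a p @ S c (-p) @ [ginv b]) @ S a p @ S b (-(p-1))"
    using eq_cong[OF s1, of "S a p @ S c (-p) @ [ginv b]" "S b (-(p-1))"] by simp
  also have "\<dots> = (S a p @ S c (-p)) @ ([ginv b] @ S a p) @ S b (-(p-1))" by simp
  also have "\<dots> \<approx> (S a p @ S c (-p)) @ (S c p @ [ginv b]) @ S b (-(p-1))" by (rule eq_cong[OF cr])
  also have "\<dots> = S a p @ (S c (-p) @ S c p) @ [ginv b] @ S b (-(p-1))" by simp
  also have "\<dots> \<approx> S a p @ [] @ [ginv b] @ S b (-(p-1))" by (rule eq_cong[OF s3])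
  also have "\<dots> = S a p @ ([ginv b] @ S b (-(p-1))) @ []" by simp
  also have "\<dots> \<approx> S a p @ S b (-p) @ []" by (rule eq_cong[OF s2])
  finally show ?thesis by (simp add: a_def b_def c_def eq_sym)
qed

lemma V_bound:
  assumes j: "1 \<le> j" "j \<le> k" and W: "\<And>q. \<bar>q\<bar> \<le> int N \<Longrightarrow> hrep (W j q) L"
  shows "\<bar>p\<bar> \<le> int N \<Longrightarrow> hrep (V j p) (nat \<bar>p\<bar> * (L + 1))"
proof -
  have B: "hrep (subgen m (m+j)) 1" using j km by (intro hrep_letter) auto
  have pos: "n \<le> N \<Longrightarrow> hrep (V j (int n)) (n * (L + 1))" for n
  proof (induction n)
    case 0 then show ?case using hrep_Nil by simp
  next
    case (Suc n)
    have "hrep (W j (int (Suc n)) @ subgen m (m+j) @ V j (int n)) (L + (1 + n * (L + 1)))"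
      using Suc by (intro hrep_app W B) auto
    then have "hrep (V j (int (Suc n))) (L + (1 + n * (L + 1)))"
      by (rule hrep_eq) (use V_rec[OF j, of "int (Suc n)"] in \<open>simp add: eq_sym\<close>)
    then show ?case by (simp add: algebra_simps)
  qed
  have neg: "n \<le> N \<Longrightarrow> hrep (V j (- int n)) (n * (L + 1))" for n
  proof (induction n)
    case 0 then show ?case using hrep_Nil by simp
  next
    case (Suc n)
    have r: "V j (- int n) \<approx> (W j (- int n) @ subgen m (m+j)) @ V j (- int n - 1)"
      using V_rec[OF j, of "- int n"] by simp
    have r2: "V j (- int n - 1) \<approx> inv_word (W j (- int n) @ subgen m (m+j)) @ V j (- int n)"
      by (rule eq_move_l) (rule eq_sym[OF r])
    have w1: "hrep (W j (- int n)) L" using Suc by (intro W) simp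
    have "hrep (inv_word (W j (- int n) @ subgen m (m+j)) @ V j (- int n)) (L + 1 + n * (L + 1))"
      using Suc by (intro hrep_app hrep_inv w1 B) simp
    then have "hrep (V j (- int n - 1)) (L + 1 + n * (L + 1))"
      by (rule hrep_eq) (rule eq_sym[OF r2])
    moreover have "- int n - 1 = - int (Suc n)" by simp
    ultimately show ?case by (simp only:) (simp add: algebra_simps)
  qed
  assume p: "\<bar>p\<bar> \<le> int N"
  show ?thesis
  proof (cases "0 \<le> p")
    case True
    then show ?thesis using pos[of "nat p"] p by simp
  next
    case False
    then show ?thesis using neg[of "nat (-p)"] p by simp
  qed
qed

lemma W_split: "W j q \<approx> inv_word (E j q) @ E (m+j) q"
  using E_ins[of j q "m+j" 1] by (simp add: inv_wpow)

lemma E_high_split: "E (m+j+1) p \<approx> E j p @ V j p"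
  using E_ins[of 1 p "m+j+1" j] by simp

lemma E_bound: "j \<le> k \<Longrightarrow> \<exists>K. \<forall>p. hrep (E (m+j+1) p) (K * (nat \<bar>p\<bar> + 1) ^ (j+1))"
proof (induction j)
  case 0
  have "hrep (E (m+1) p) (m * (nat \<bar>p\<bar> + 1) ^ 1)" for p
    by (rule hrep_mono[OF E_low]) auto
  then show ?case by auto
next
  case (Suc j)
  then obtain K where K: "\<And>p. hrep (E (m+j+1) p) (K * (nat \<bar>p\<bar> + 1) ^ (j+1))" by auto
  have j1: "1 \<le> Suc j" "Suc j \<le> k" using Suc by auto
  have "hrep (E (m + Suc j + 1) p) ((2*j + K + 1) * (nat \<bar>p\<bar> + 1) ^ (Suc j + 1))" for p
  proof -
    define N where "N = nat \<bar>p\<bar>"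
    define L where "L = (j + K) * (N + 1) ^ (j+1)"
    have Wb: "hrep (W (Suc j) q) L" if q: "\<bar>q\<bar> \<le> int N" for q
    proof -
      have e1: "hrep (E (Suc j) q) (j * nat \<bar>q\<bar>)" using E_low[of "Suc j" q] j1 km by simp
      have "hrep (inv_word (E (Suc j) q) @ E (m + Suc j) q) (j * nat \<bar>q\<bar> + K * (nat \<bar>q\<bar> + 1) ^ (j+1))"
        using hrep_app[OF hrep_inv[OF e1] K[of q]] by simp
      then have h: "hrep (W (Suc j) q) (j * nat \<bar>q\<bar> + K * (nat \<bar>q\<bar> + 1) ^ (j+1))"
        by (rule hrep_eq) (rule eq_sym[OF W_split])
      have nq: "nat \<bar>q\<bar> \<le> N" using q by (simp add: N_def)
      have "j * nat \<bar>q\<bar> \<le> j * (N + 1) ^ (j+1)"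
      proof -
        have "nat \<bar>q\<bar> \<le> N + 1" using nq by simp
        also have "N + 1 \<le> (N+1) ^ (j+1)" using self_le_power[of "N+1" "j+1"] by simp
        finally show ?thesis by simp
      qed
      moreover have "K * (nat \<bar>q\<bar> + 1) ^ (j+1) \<le> K * (N + 1) ^ (j+1)"
        using nq by (intro mult_le_mono2 power_mono) auto
      ultimately have "j * nat \<bar>q\<bar> + K * (nat \<bar>q\<bar> + 1) ^ (j+1) \<le> L"
        unfolding L_def by (simp add: algebra_simps)
      then show ?thesis using hrep_mono[OF h] by simp
    qed
    have pN: "\<bar>p\<bar> \<le> int N" by (simp add: N_def)
    have vb: "hrep (V (Suc j) p) (N * (L + 1))"
      using V_bound[OF j1 Wb pN] unfolding N_def by simp
    have eb: "hrep (E (Suc j) p) (j * N)" using E_low[of "Suc j" p] j1 km by (simp add: N_def)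
    have "hrep (E (Suc j) p @ V (Suc j) p) (j * N + N * (L + 1))" by (rule hrep_app[OF eb vb])
    then have h: "hrep (E (m + Suc j + 1) p) (j * N + N * (L + 1))"
      by (rule hrep_eq) (rule eq_sym[OF E_high_split])
    have "j * N + N * (L + 1) = j * N + N + N * (j + K) * (N + 1) ^ (j+1)"
      by (simp add: L_def algebra_simps)
    also have "\<dots> \<le> j * (N+1) ^ (j+2) + (N+1) ^ (j+2) + (j + K) * (N + 1) ^ (j+2)"
    proof -
      have a: "N \<le> (N+1) ^ (j+2)"
        using self_le_power[of "N+1" "j+2"] by simp
      have b: "N * (j + K) * (N + 1) ^ (j+1) \<le> (j + K) * (N + 1) ^ (j+2)"
      proof -
        have "N * (N + 1) ^ (j+1) \<le> (N+1) * (N + 1) ^ (j+1)" by simp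
        then show ?thesis by (simp add: algebra_simps)
      qed
      show ?thesis using a b mult_le_mono2[OF a, of j] by linarith
    qed
    also have "\<dots> = (2*j + K + 1) * (N + 1) ^ (Suc j + 1)" by (simp add: algebra_simps)
    finally show ?thesis using hrep_mono[OF h] by (simp add: N_def)
  qed
  then show ?case by blast
qed


lemma E_bound_unif: "\<exists>K. \<forall>j\<le>k. \<forall>p. hrep (E (m+j+1) p) (K * (nat \<bar>p\<bar> + 1) ^ (j+1))"
proof (rule choice_le)
  show "\<exists>K. \<forall>p. hrep (E (m+j+1) p) (K * (nat \<bar>p\<bar> + 1) ^ (j+1))" if "j \<le> k" for j
    using E_bound[OF that] .
  show "hrep (E (m+j+1) p) (K' * (nat \<bar>p\<bar> + 1) ^ (j+1))"
    if "hrep (E (m+j+1) p) (K * (nat \<bar>p\<bar> + 1) ^ (j+1))" "K \<le> K'" for j p K K'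
    using that by (elim hrep_mono) simp
qed

abbreviation cj :: "int \<Rightarrow> letter list \<Rightarrow> letter list" where "cj p w \<equiv> S 1 p @ w @ S 1 (-p)"

lemma cj_inv: "cj p (inv_word w) = inv_word (cj p w)"
  by (simp add: inv_wpow)

lemma cj_app: "cj p (u @ v) \<approx> cj p u @ cj p v"
  using eq_ins[of "S 1 p @ u" "v @ S 1 (-p)" "S 1 (-p)"] by (simp add: inv_wpow)

lemma cj_eq: "u \<approx> v \<Longrightarrow> cj p u \<approx> cj p v" by (rule eq_cong)

lemma conj_A: "1 \<le> i \<Longrightarrow> i \<le> m \<Longrightarrow> cj p (subgen m i) \<approx> E i p @ subgen m i @ inv_word (E i p)"
proof -
  assume a: "1 \<le> i" "i \<le> m"
  define Aw where "Aw = subgen m i"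
  have sg: "Aw = [ginv (i+1)] @ [gen i]" using a by (simp add: subgen_def Aw_def)
  have c0: "Aw @ [gen i] \<approx> [gen i] @ Aw"
    using eq_appR[OF comm_rel'[OF a], of "[gen i]"] unfolding sg by (simp add: eq_sym)
  have c1: "S i (-p) @ Aw \<approx> Aw @ S i (-p)" using conj_pow[OF c0, of "-p"] by (simp add: eq_sym)
  have c2: "S i (-p) @ S i p \<approx> []" using wpow_add[of "[gen i]" "-p" p] by simp
  have "E i p @ Aw @ inv_word (E i p) = S 1 p @ (S i (-p) @ Aw) @ S i p @ S 1 (-p)" by (simp add: inv_wpow)
  also have "\<dots> \<approx> S 1 p @ (Aw @ S i (-p)) @ S i p @ S 1 (-p)" by (rule eq_cong[OF c1])
  also have "\<dots> = (S 1 p @ Aw) @ (S i (-p) @ S i p) @ S 1 (-p)" by simp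
  also have "\<dots> \<approx> (S 1 p @ Aw) @ [] @ S 1 (-p)" by (rule eq_cong[OF c2])
  finally show ?thesis by (simp add: Aw_def eq_sym)
qed

lemma conj_B: "1 \<le> j \<Longrightarrow> j \<le> k \<Longrightarrow> cj p (subgen m (m+j)) \<approx> E (m+j) p @ subgen m (m+j) @ inv_word (E j p)"
proof -
  assume j: "1 \<le> j" "j \<le> k"
  define a where "a = j"
  define b where "b = m+j+1"
  define c where "c = m+j"
  have cr: "[ginv b] @ S a (-p) \<approx> S c (-p) @ [ginv b]"
    unfolding a_def b_def c_def by (rule conj_pow[OF conj_rel[OF j]])
  have s1: "S a (-p) @ [gen a] @ S a p \<approx> [gen a]"
  proof -
    have "S a (-p) @ S a 1 \<approx> S a (-p + 1)" by (rule wpow_add)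
    then have "S a (-p) @ [gen a] @ S a p \<approx> S a (-p+1) @ S a p" using eq_appR by fastforce
    also have "\<dots> \<approx> S a 1" using wpow_add[of "[gen a]" "-p+1" p] by simp
    finally show ?thesis by simp
  qed
  have "E (m+j) p @ subgen m (m+j) @ inv_word (E j p) = S 1 p @ (S c (-p) @ [ginv b]) @ [gen a] @ S a p @ S 1 (-p)"
    using j by (simp add: subgen_B inv_wpow a_def b_def c_def)
  also have "\<dots> \<approx> S 1 p @ ([ginv b] @ S a (-p)) @ [gen a] @ S a p @ S 1 (-p)" by (rule eq_cong[OF eq_sym[OF cr]])
  also have "\<dots> = (S 1 p @ [ginv b]) @ (S a (-p) @ [gen a] @ S a p) @ S 1 (-p)" by simp
  also have "\<dots> \<approx> (S 1 p @ [ginv b]) @ [gen a] @ S 1 (-p)" by (rule eq_cong[OF s1])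
  finally show ?thesis using j by (simp add: subgen_B a_def b_def eq_sym)
qed

context assumes mk: "m \<le> k + 1"
begin

lemma conj_letter_bound: "\<exists>C. \<forall>x p. valid_H m k [x] \<longrightarrow> hrep (cj p (subst_letter m x)) (C * (nat \<bar>p\<bar> + 1) ^ k)"
proof -
  obtain K where K: "\<forall>j\<le>k. \<forall>p. hrep (E (m+j+1) p) (K * (nat \<bar>p\<bar> + 1) ^ (j+1))"
    using E_bound_unif by auto
  define C where "C = K + 2 * k + 1"
  have kp: "k * nat \<bar>p\<bar> \<le> k * (nat \<bar>p\<bar> + 1) ^ k" for p
  proof (cases k)
    case 0 then show ?thesis by simp
  next
    case (Suc k')
    have "nat \<bar>p\<bar> \<le> nat \<bar>p\<bar> + 1" by simp
    also have "\<dots> \<le> (nat \<bar>p\<bar> + 1) ^ k" using self_le_power[of "nat \<bar>p\<bar> + 1" k] Suc by simp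
    finally show ?thesis by simp
  qed
  have pos: "hrep (cj p (subgen m i)) (C * (nat \<bar>p\<bar> + 1) ^ k)" if i: "1 \<le> i" "i \<le> m + k" for i p
  proof (cases "i \<le> m")
    case True
    have e: "hrep (E i p) ((i - 1) * nat \<bar>p\<bar>)" using E_low[of i p] i True by simp
    have "hrep (E i p @ subgen m i @ inv_word (E i p)) ((i - 1) * nat \<bar>p\<bar> + (1 + (i - 1) * nat \<bar>p\<bar>))"
      using i by (intro hrep_app hrep_inv hrep_letter e) auto
    then have h: "hrep (cj p (subgen m i)) ((i - 1) * nat \<bar>p\<bar> + (1 + (i - 1) * nat \<bar>p\<bar>))"
      by (rule hrep_eq) (rule eq_sym[OF conj_A[OF i(1) True]])
    have "i - 1 \<le> k" using True mk by linarith
    then have "(i - 1) * nat \<bar>p\<bar> \<le> k * nat \<bar>p\<bar>" by (rule mult_le_mono1)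
    then have X: "(i - 1) * nat \<bar>p\<bar> \<le> k * (nat \<bar>p\<bar> + 1) ^ k" using kp[of p] by linarith
    have Y: "1 \<le> (nat \<bar>p\<bar> + 1) ^ k" by simp
    have Z: "C * (nat \<bar>p\<bar> + 1) ^ k = K * (nat \<bar>p\<bar> + 1) ^ k + 2 * (k * (nat \<bar>p\<bar> + 1) ^ k) + (nat \<bar>p\<bar> + 1) ^ k"
      by (simp add: C_def algebra_simps)
    have "(i - 1) * nat \<bar>p\<bar> + (1 + (i - 1) * nat \<bar>p\<bar>) \<le> C * (nat \<bar>p\<bar> + 1) ^ k"
      using X Y Z by linarith
    then show ?thesis using hrep_mono[OF h] by simp
  next
    case False
    define j where "j = i - m"
    have j: "1 \<le> j" "j \<le> k" "i = m + j" using False i by (auto simp: j_def)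
    have e0: "hrep (E (m+(j-1)+1) p) (K * (nat \<bar>p\<bar> + 1) ^ ((j-1)+1))"
      using K j(2) by auto
    have eqs: "m+(j-1)+1 = m+j" "(j-1)+1 = j" using j by auto
    have e1: "hrep (E (m+j) p) (K * (nat \<bar>p\<bar> + 1) ^ j)"
      using e0 unfolding eqs .
    have e2: "hrep (E j p) ((j - 1) * nat \<bar>p\<bar>)" using E_low[of j p] j km by simp
    have "hrep (E (m+j) p @ subgen m (m+j) @ inv_word (E j p)) (K * (nat \<bar>p\<bar> + 1) ^ j + (1 + (j - 1) * nat \<bar>p\<bar>))"
      using j by (intro hrep_app hrep_inv hrep_letter e1 e2) auto
    then have h: "hrep (cj p (subgen m i)) (K * (nat \<bar>p\<bar> + 1) ^ j + (1 + (j - 1) * nat \<bar>p\<bar>))"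
      unfolding j(3) by (rule hrep_eq) (rule eq_sym[OF conj_B[OF j(1,2)]])
    have "K * (nat \<bar>p\<bar> + 1) ^ j \<le> K * (nat \<bar>p\<bar> + 1) ^ k" using j by (intro mult_le_mono2 power_increasing) auto
    moreover have "(j - 1) * nat \<bar>p\<bar> \<le> k * nat \<bar>p\<bar>" using j by (intro mult_le_mono1) linarith
    moreover have "1 \<le> (nat \<bar>p\<bar> + 1) ^ k" by simp
    moreover have Z: "C * (nat \<bar>p\<bar> + 1) ^ k = K * (nat \<bar>p\<bar> + 1) ^ k + 2 * (k * (nat \<bar>p\<bar> + 1) ^ k) + (nat \<bar>p\<bar> + 1) ^ k"
      by (simp add: C_def algebra_simps)
    ultimately have "K * (nat \<bar>p\<bar> + 1) ^ j + (1 + (j - 1) * nat \<bar>p\<bar>) \<le> C * (nat \<bar>p\<bar> + 1) ^ k"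
      using kp[of p] by linarith
    then show ?thesis using hrep_mono[OF h] by simp
  qed
  have "hrep (cj p (subst_letter m x)) (C * (nat \<bar>p\<bar> + 1) ^ k)" if "valid_H m k [x]" for x p
  proof -
    obtain i s where x: "x = (i, s)" by fastforce
    have i: "1 \<le> i" "i \<le> m + k" using that x by (auto simp: valid_H_def)
    show ?thesis
    proof (cases s)
      case True
      have "cj p (subst_letter m x) = inv_word (cj p (subgen m i))"
        using x True by (simp add: subst_letter_def inv_wpow)
      then show ?thesis using hrep_inv[OF pos[OF i]] by simp
    next
      case False
      then show ?thesis using x pos[OF i] by (simp add: subst_letter_def)
    qed
  qed
  then show ?thesis by blast
qed

end


lemma es_eq: "u \<approx> v \<Longrightarrow> es u = es v"
proof (induction rule: eqG.induct)
  case (cancel u x v) then show ?case by (simp add: es_Cons inv_letter_def)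
next
  case (rel r u v)
  then have "es r = 0" by (auto simp: relators_def es_Cons gen_def ginv_def)
  then show ?case by simp
qed simp_all

lemma es_subst: "es (subst m h) = 0"
proof (induction h)
  case (Cons x h)
  have "es (subgen m i) = 0" for i by (simp add: subgen_def es_Cons gen_def ginv_def)
  then have "es (subst_letter m x) = 0" by (simp add: subst_letter_def es_inv)
  then show ?case using Cons by (simp add: subst_Cons)
qed simp

lemma valid_G_Cons: "valid_G m k (x # u) \<longleftrightarrow> 1 \<le> fst x \<and> fst x \<le> m + k + 1 \<and> valid_G m k u"
  by (auto simp: valid_G_def)

context assumes mk: "m \<le> k + 1"
begin

lemma conj_word:
  assumes C: "\<forall>x p. valid_H m k [x] \<longrightarrow> hrep (cj p (subst_letter m x)) (C * (nat \<bar>p\<bar> + 1) ^ k)"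
  shows "valid_H m k h \<Longrightarrow> hrep (cj p (subst m h)) (length h * (C * (nat \<bar>p\<bar> + 1) ^ k))"
proof (induction h)
  case Nil
  have "cj p [] \<approx> []" using wpow_add[of "[gen 1]" p "-p"] by simp
  then show ?case using hrep_eq[OF hrep_Nil] eq_sym by (simp add: subst_def)
next
  case (Cons x h)
  have vx: "valid_H m k [x]" "valid_H m k h" using Cons.prems by (auto simp: valid_H_def)
  have "hrep (cj p (subst_letter m x) @ cj p (subst m h)) (C * (nat \<bar>p\<bar> + 1) ^ k + length h * (C * (nat \<bar>p\<bar> + 1) ^ k))"
    using C[rule_format, OF vx(1)] vx Cons.IH by (intro hrep_app) auto
  then have "hrep (cj p (subst m (x # h))) (C * (nat \<bar>p\<bar> + 1) ^ k + length h * (C * (nat \<bar>p\<bar> + 1) ^ k))"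
    unfolding subst_Cons by (rule hrep_eq) (rule eq_sym[OF cj_app])
  then show ?case by simp
qed

lemma conj_hrep:
  assumes C: "\<forall>x p. valid_H m k [x] \<longrightarrow> hrep (cj p (subst_letter m x)) (C * (nat \<bar>p\<bar> + 1) ^ k)"
  shows "hrep w L \<Longrightarrow> hrep (cj p w) (L * (C * (nat \<bar>p\<bar> + 1) ^ k))"
proof -
  assume "hrep w L"
  then obtain h where h: "valid_H m k h" "length h \<le> L" "subst m h \<approx> w" by (auto simp: hrep_def)
  have "hrep (cj p (subst m h)) (length h * (C * (nat \<bar>p\<bar> + 1) ^ k))" by (rule conj_word[OF C h(1)])
  then have "hrep (cj p w) (length h * (C * (nat \<bar>p\<bar> + 1) ^ k))" by (rule hrep_eq) (rule cj_eq[OF h(3)])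
  then show ?thesis by (rule hrep_mono) (simp add: h(2))
qed

lemma gen_piece_bound: "\<exists>c. \<forall>i. 1 \<le> i \<and> i \<le> m + k + 1 \<longrightarrow> hrep [ginv 1, gen i] c"
proof -
  obtain K where K: "\<forall>j\<le>k. \<forall>p. hrep (E (m+j+1) p) (K * (nat \<bar>p\<bar> + 1) ^ (j+1))"
    using E_bound_unif by auto
  have "hrep [ginv 1, gen i] (m + K * 2 ^ (k+1))" if i: "1 \<le> i" "i \<le> m + k + 1" for i
  proof (cases "i \<le> m + 1")
    case True
    have "hrep (E i (-1)) ((i - 1) * nat \<bar>-1\<bar>)" using E_low[of i "-1"] i True by simp
    then show ?thesis using True by (simp, elim hrep_mono) simp
  next
    case False
    define j where "j = i - m - 1"
    have j: "j \<le> k" "i = m + j + 1" using i False by (auto simp: j_def)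
    have "hrep (E (m+j+1) (-1)) (K * (nat \<bar>-1\<bar> + 1) ^ (j+1))" using K j by blast
    moreover have "nat \<bar>-1::int\<bar> + 1 = 2" by simp
    moreover have "E (m+j+1) (-1) = [ginv 1, gen i]" using j by simp
    ultimately have "hrep [ginv 1, gen i] (K * 2 ^ (j+1))" by metis
    moreover have "K * 2 ^ (j+1) \<le> m + K * 2 ^ (k+1)" using j
      by (metis add_le_mono1 le_add2 mult_le_mono2 one_le_numeral power_increasing trans_le_add2)
    ultimately show ?thesis by (rule hrep_mono)
  qed
  then show ?thesis by blast
qed

lemma rewrite_word:
  assumes C: "\<forall>x p. valid_H m k [x] \<longrightarrow> hrep (cj p (subst_letter m x)) (C * (nat \<bar>p\<bar> + 1) ^ k)"
    and c0: "\<forall>i. 1 \<le> i \<and> i \<le> m + k + 1 \<longrightarrow> hrep [ginv 1, gen i] c0"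
  shows "valid_G m k u \<Longrightarrow> \<exists>w. hrep w (length u * (c0 * (C * (nat \<bar>p\<bar> + length u + 1) ^ k)))
            \<and> S 1 p @ u \<approx> w @ S 1 (p + es u)"
proof (induction u arbitrary: p)
  case Nil
  show ?case by (intro exI[of _ "[]"]) (simp add: hrep_Nil)
next
  case (Cons x u)
  obtain i s where x: "x = (i, s)" by fastforce
  have i: "1 \<le> i" "i \<le> m + k + 1" and vu: "valid_G m k u" using Cons.prems x by (auto simp: valid_G_Cons)
  define p' where "p' = p + es [x]"
  define B where "B = c0 * (C * (nat \<bar>p\<bar> + length (x # u) + 1) ^ k)"
  have piece: "\<exists>w. hrep w B \<and> S 1 p @ [x] \<approx> w @ S 1 p'"
  proof (cases s)
    case False
    then have xg: "x = gen i" "p' = p + 1" using x by (simp_all add: gen_def p'_def es_def)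
    have h1: "hrep (cj (p+1) [ginv 1, gen i]) (c0 * (C * (nat \<bar>p+1\<bar> + 1) ^ k))"
      by (rule conj_hrep[OF C]) (use c0 i in blast)
    have "c0 * (C * (nat \<bar>p+1\<bar> + 1) ^ k) \<le> B" unfolding B_def
      by (intro mult_le_mono2 power_mono) auto
    note h2 = hrep_mono[OF h1 this]
    have s1: "S 1 (p+1) @ [ginv 1] \<approx> S 1 p" using wpow_add[of "[gen 1]" "p+1" "-1"] by simp
    have s2: "S 1 (-(p+1)) @ S 1 (p+1) \<approx> []" using wpow_add[of "[gen 1]" "-(p+1)" "p+1"] by simp
    have "cj (p+1) [ginv 1, gen i] @ S 1 (p+1) = (S 1 (p+1) @ [ginv 1, gen i]) @ (S 1 (-(p+1)) @ S 1 (p+1)) @ []" by simp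
    also have "\<dots> \<approx> (S 1 (p+1) @ [ginv 1, gen i]) @ [] @ []" by (rule eq_cong[OF s2])
    also have "\<dots> = [] @ (S 1 (p+1) @ [ginv 1]) @ [gen i]" by simp
    also have "\<dots> \<approx> [] @ S 1 p @ [gen i]" by (rule eq_cong[OF s1])
    finally show ?thesis using h2 xg by (intro exI[of _ "cj (p+1) [ginv 1, gen i]"]) (simp add: eq_sym)
  next
    case True
    then have xg: "x = ginv i" "p' = p - 1" using x by (simp_all add: ginv_def p'_def es_def)
    have h0: "hrep [ginv i, gen 1] c0" using hrep_inv[of "[ginv 1, gen i]" c0] c0 i by simp
    have h1: "hrep (cj p [ginv i, gen 1]) (c0 * (C * (nat \<bar>p\<bar> + 1) ^ k))"
      by (rule conj_hrep[OF C h0])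
    have "c0 * (C * (nat \<bar>p\<bar> + 1) ^ k) \<le> B" unfolding B_def
      by (intro mult_le_mono2 power_mono) auto
    note h2 = hrep_mono[OF h1 this]
    have s1: "S 1 (-p) @ S 1 (p - 1) \<approx> [ginv 1]" using wpow_add[of "[gen 1]" "-p" "p-1"] by simp
    have s2: "[gen 1] @ [ginv 1] \<approx> []" using eq_cancel1[of "gen 1"] by simp
    have "cj p [ginv i, gen 1] @ S 1 (p-1) = (S 1 p @ [ginv i, gen 1]) @ (S 1 (-p) @ S 1 (p-1)) @ []" by simp
    also have "\<dots> \<approx> (S 1 p @ [ginv i, gen 1]) @ [ginv 1] @ []" by (rule eq_cong[OF s1])
    also have "\<dots> = (S 1 p @ [ginv i]) @ ([gen 1] @ [ginv 1]) @ []" by simp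
    also have "\<dots> \<approx> (S 1 p @ [ginv i]) @ [] @ []" by (rule eq_cong[OF s2])
    finally show ?thesis using h2 xg by (intro exI[of _ "cj p [ginv i, gen 1]"]) (simp add: eq_sym)
  qed
  then obtain w1 where w1: "hrep w1 B" "S 1 p @ [x] \<approx> w1 @ S 1 p'" by blast
  obtain w2 where w2: "hrep w2 (length u * (c0 * (C * (nat \<bar>p'\<bar> + length u + 1) ^ k)))"
    "S 1 p' @ u \<approx> w2 @ S 1 (p' + es u)" using Cons.IH[OF vu] by blast
  have "nat \<bar>p'\<bar> \<le> nat \<bar>p\<bar> + 1" by (auto simp: p'_def es_def)
  then have "length u * (c0 * (C * (nat \<bar>p'\<bar> + length u + 1) ^ k)) \<le> length u * B"
    unfolding B_def by (intro mult_le_mono2 power_mono) auto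
  note w2' = hrep_mono[OF w2(1) this]
  have "S 1 p @ x # u = (S 1 p @ [x]) @ u" by simp
  also have "\<dots> \<approx> (w1 @ S 1 p') @ u" by (rule eq_appR[OF w1(2)])
  also have "\<dots> = w1 @ (S 1 p' @ u)" by simp
  also have "\<dots> \<approx> w1 @ (w2 @ S 1 (p' + es u))" by (rule eq_appL[OF w2(2)])
  finally have e0: "S 1 p @ x # u \<approx> w1 @ (w2 @ S 1 (p' + es u))" .
  have "p' + es u = p + es (x # u)" by (simp add: p'_def es_Cons[of x u] es_def)
  with e0 have e: "S 1 p @ x # u \<approx> (w1 @ w2) @ S 1 (p + es (x # u))"
    by simp
  have "hrep (w1 @ w2) (B + length u * B)" by (rule hrep_app[OF w1(1) w2'])
  then have "hrep (w1 @ w2) (length (x # u) * (c0 * (C * (nat \<bar>p\<bar> + length (x # u) + 1) ^ k)))"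
    by (simp add: B_def algebra_simps)
  then show ?case using e by blast
qed

lemma upper_main: "\<exists>c. \<forall>u. valid_G m k u \<and> es u = 0 \<longrightarrow> hrep u (c * (length u + 1) ^ (k+1))"
proof -
  obtain C where C: "\<forall>x p. valid_H m k [x] \<longrightarrow> hrep (cj p (subst_letter m x)) (C * (nat \<bar>p\<bar> + 1) ^ k)"
    using conj_letter_bound[OF mk] by blast
  obtain c0 where c0: "\<forall>i. 1 \<le> i \<and> i \<le> m + k + 1 \<longrightarrow> hrep [ginv 1, gen i] c0"
    using gen_piece_bound by blast
  have "hrep u ((c0 * C) * (length u + 1) ^ (k+1))" if u: "valid_G m k u" "es u = 0" for u
  proof -
    obtain w where w: "hrep w (length u * (c0 * (C * (nat \<bar>0::int\<bar> + length u + 1) ^ k)))"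
      "S 1 0 @ u \<approx> w @ S 1 (0 + es u)" using rewrite_word[OF C c0 u(1), of 0] by blast
    have "hrep u (length u * (c0 * (C * (length u + 1) ^ k)))"
      using w u(2) by (simp, elim hrep_eq) (simp add: eq_sym)
    moreover have "length u * (c0 * (C * (length u + 1) ^ k)) \<le> (c0 * C) * (length u + 1) ^ (k+1)"
    proof -
      have "length u * (length u + 1) ^ k \<le> (length u + 1) * (length u + 1) ^ k" by simp
      then show ?thesis by (simp add: algebra_simps mult_le_mono2)
    qed
    ultimately show ?thesis by (rule hrep_mono)
  qed
  then show ?thesis by blast
qed

end

end

end

type_synonym gel = "int \<times> (int \<Rightarrow> real)"

definition gmul :: "gel \<Rightarrow> gel \<Rightarrow> gel" where
  "gmul a b = (fst a + fst b, \<lambda>y. snd a y + snd b (y + fst a))"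

definition gid :: gel where "gid = (0, \<lambda>_. 0)"

lemma gmul_assoc: "gmul (gmul a b) c = gmul a (gmul b c)"
  by (simp add: gmul_def algebra_simps)
lemma gmul_id[simp]: "gmul gid a = a" "gmul a gid = a"
  by (simp_all add: gmul_def gid_def)

definition Fv :: "nat \<Rightarrow> nat \<Rightarrow> int \<Rightarrow> real" where
  "Fv m i y = (if m < i then (of_int y + of_nat (i-m-1) - 1) gchoose (i-m-1) else 0)"

definition lval :: "nat \<Rightarrow> letter \<Rightarrow> gel" where
  "lval m x = (if snd x then (-1, \<lambda>y. - Fv m (fst x) (y-1)) else (1, Fv m (fst x)))"

fun ev :: "nat \<Rightarrow> letter list \<Rightarrow> gel" where
  "ev m [] = gid"
| "ev m (x # w) = gmul (lval m x) (ev m w)"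

lemma ev_append: "ev m (u @ v) = gmul (ev m u) (ev m v)"
  by (induction u) (simp_all add: gmul_assoc)

lemma ev_cancel: "ev m [x, inv_letter x] = gid"
  by (cases x) (auto simp: lval_def inv_letter_def gmul_def gid_def)

lemma lval_gen[simp]: "lval m (gen i) = (1, Fv m i)" "lval m (ginv i) = (-1, \<lambda>y. - Fv m i (y-1))"
  by (simp_all add: lval_def gen_def ginv_def)

lemma Fv_low: "i \<le> m \<Longrightarrow> Fv m i y = 0" by (simp add: Fv_def)
lemma Fv_m1: "Fv m (m+1) y = 1" by (simp add: Fv_def)

lemma Fv_step: "1 \<le> j \<Longrightarrow> Fv m (m+j+1) y - Fv m (m+j+1) (y-1) = Fv m (m+j) y"
proof -
  assume j: "1 \<le> j"
  then obtain n where n: "j = Suc n" by (cases j) auto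
  define z :: real where "z = of_int y + of_nat n - 1"
  have a: "Fv m (m+j+1) y = (z + 1) gchoose (Suc n)" by (simp add: Fv_def n z_def algebra_simps)
  have b: "Fv m (m+j+1) (y-1) = z gchoose (Suc n)" by (simp add: Fv_def n z_def algebra_simps)
  have c: "Fv m (m+j) y = z gchoose n" by (simp add: Fv_def n z_def algebra_simps)
  show ?thesis unfolding a b c by (simp add: gbinomial_Suc_Suc)
qed

lemma ev_rel: "k \<le> m \<Longrightarrow> r \<in> relators m k \<Longrightarrow> ev m r = gid"
proof -
  assume km: "k \<le> m" and r: "r \<in> relators m k"
  then consider (a) i where "r = [ginv i, ginv (i+1), gen i, gen (i+1)]" "1 \<le> i" "i \<le> m"
    | (b) j where "r = [ginv (m+j+1), gen j, gen (m+j+1), ginv (m+j)]" "1 \<le> j" "j \<le> k"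
    by (auto simp: relators_def)
  then show ?thesis
  proof cases
    case a
    have c1: "Fv m i y = 0" for y using a by (simp add: Fv_low)
    define cst where "cst = Fv m (Suc i) 0"
    have c2: "Fv m (Suc i) y = cst" for y using a by (simp add: Fv_def cst_def)
    show ?thesis using a by (simp add: gmul_def gid_def c1 c2)
  next
    case b
    have c1: "Fv m j y = 0" for y using b km by (simp add: Fv_low)
    have st: "Fv m (m+j+1) y - Fv m (m+j+1) (y-1) = Fv m (m+j) y" for y using Fv_step b by simp
    have "(\<lambda>y. Fv m (Suc (m + j)) y - Fv m (m + j) y - Fv m (Suc (m + j)) (y - 1)) = (\<lambda>_. 0)"
    proof
      fix y show "Fv m (Suc (m + j)) y - Fv m (m + j) y - Fv m (Suc (m + j)) (y - 1) = 0"
        using st[of y] by simp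
    qed
    then show ?thesis using b by (simp add: gmul_def gid_def c1)
  qed
qed

lemma ev_eq: assumes km: "k \<le> m" shows "eqG m k u v \<Longrightarrow> ev m u = ev m v"
proof (induction rule: eqG.induct)
  case (cancel u x v)
  have "ev m (u @ [x, inv_letter x] @ v) = gmul (ev m u) (gmul (ev m [x, inv_letter x]) (ev m v))"
    by (simp only: ev_append)
  then show ?case using ev_cancel[of m x] by (simp add: ev_append del: ev.simps)
next
  case (rel r u v)
  then show ?case using ev_rel[OF km, of r] by (simp add: ev_append del: ev.simps)
qed simp_all


lemma Fv_zero_bound: "\<bar>Fv m i 0\<bar> \<le> 1"
proof (cases "m < i")
  case False then show ?thesis by (simp add: Fv_def)
next
  case True
  define n where "n = i - m - 1"
  have Fe: "Fv m i 0 = (of_int 0 + of_nat n - 1) gchoose n" using True unfolding Fv_def n_def by simp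
  show ?thesis
  proof (cases n)
    case 0 then show ?thesis using Fe by simp
  next
    case (Suc n')
    have "Fv m i 0 = of_nat n' gchoose n" using Fe Suc by simp
    also have "\<dots> = of_nat (n' choose n)" by (simp add: binomial_gbinomial)
    also have "\<dots> = 0" using Suc by simp
    finally show ?thesis by simp
  qed
qed

lemma ev_letter:
  assumes km: "k \<le> m" and v: "valid_H m k [x]"
  shows "fst (ev m (subst_letter m x)) = 0 \<and> \<bar>snd (ev m (subst_letter m x)) 1\<bar> \<le> 1"
proof -
  obtain i s where x: "x = (i, s)" by fastforce
  have i: "1 \<le> i" "i \<le> m + k" using v x by (auto simp: valid_H_def)
  define lo where "lo = (if i \<le> m then i else i - m)"
  have lo: "lo \<le> m" using i km by (auto simp: lo_def)
  have sg: "subgen m i = [ginv (i+1), gen lo]" by (simp add: subgen_def lo_def)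
  have F0: "Fv m lo y = 0" for y using lo by (simp add: Fv_low)
  have b: "\<bar>Fv m (i+1) 0\<bar> \<le> 1" by (rule Fv_zero_bound)
  show ?thesis
  proof (cases s)
    case True
    have "subst_letter m x = [ginv lo, gen (i+1)]" using x True by (simp add: subst_letter_def sg)
    then show ?thesis using b by (simp add: gmul_def gid_def F0)
  next
    case False
    have "subst_letter m x = [ginv (i+1), gen lo]" using x False by (simp add: subst_letter_def sg)
    then show ?thesis using b by (simp add: gmul_def gid_def F0)
  qed
qed

lemma ev_subst:
  assumes km: "k \<le> m"
  shows "valid_H m k h \<Longrightarrow> fst (ev m (subst m h)) = 0 \<and> \<bar>snd (ev m (subst m h)) 1\<bar> \<le> real (length h)"
proof (induction h)
  case Nil then show ?case by (simp add: gid_def)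
next
  case (Cons x h)
  have v: "valid_H m k [x]" "valid_H m k h" using Cons.prems by (auto simp: valid_H_def)
  note a = ev_letter[OF km v(1)]
  note b = Cons.IH[OF v(2)]
  have "ev m (subst m (x # h)) = gmul (ev m (subst_letter m x)) (ev m (subst m h))"
    by (simp add: subst_Cons ev_append del: ev.simps)
  moreover have "\<bar>snd (ev m (subst_letter m x)) 1 + snd (ev m (subst m h)) 1\<bar> \<le>
     \<bar>snd (ev m (subst_letter m x)) 1\<bar> + \<bar>snd (ev m (subst m h)) 1\<bar>" by (rule abs_triangle_ineq)
  ultimately show ?case using a b by (simp add: gmul_def)
qed

lemma ev_rep_gen: "ev m (replicate N (gen c)) = (int N, \<lambda>y. \<Sum>l<N. Fv m c (y + int l))"
proof (induction N)
  case 0 then show ?case by (simp add: gid_def)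
next
  case (Suc N)
  have "(\<lambda>y. Fv m c y + (\<Sum>l<N. Fv m c (y + 1 + int l))) = (\<lambda>y. \<Sum>l<Suc N. Fv m c (y + int l))"
  proof
    fix y show "Fv m c y + (\<Sum>l<N. Fv m c (y + 1 + int l)) = (\<Sum>l<Suc N. Fv m c (y + int l))"
      by (subst sum.lessThan_Suc_shift) (simp add: algebra_simps)
  qed
  then show ?case using Suc by (simp add: gmul_def algebra_simps)
qed

lemma ev_rep_ginv1: "1 \<le> m \<Longrightarrow> ev m (replicate N (ginv 1)) = (- int N, \<lambda>y. 0)"
  by (induction N) (simp_all add: gmul_def gid_def Fv_low)

lemma sum_choose: "(\<Sum>l<N. (l + k) choose k) = (N + k) choose (Suc k)"
  by (induction N) simp_all

definition wN :: "nat \<Rightarrow> nat \<Rightarrow> nat \<Rightarrow> letter list" where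
  "wN m k N = replicate N (gen (m+k+1)) @ replicate N (ginv 1)"

lemma ev_wN: "1 \<le> m \<Longrightarrow> snd (ev m (wN m k N)) 1 = real ((N + k) choose (Suc k))"
proof -
  assume m: "1 \<le> m"
  have r: "ev m (wN m k N) = gmul (ev m (replicate N (gen (m+k+1)))) (- int N, \<lambda>y. 0)"
    by (simp only: wN_def ev_append ev_rep_ginv1[OF m])
  have "snd (ev m (wN m k N)) 1 = (\<Sum>l<N. Fv m (m+k+1) (1 + int l))"
    unfolding r by (simp only: ev_rep_gen) (simp add: gmul_def)
  also have "\<dots> = (\<Sum>l<N. real ((l + k) choose k))"
  proof (rule sum.cong)
    fix l assume "l \<in> {..<N}"
    have "Fv m (m+k+1) (1 + int l) = (of_nat (l + k)) gchoose k" by (simp add: Fv_def)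
    also have "\<dots> = real ((l + k) choose k)" by (simp add: binomial_gbinomial)
    finally show "Fv m (m+k+1) (1 + int l) = real ((l + k) choose k)" .
  qed simp
  also have "\<dots> = real ((N + k) choose (Suc k))" by (simp only: of_nat_sum[symmetric] sum_choose)
  finally show ?thesis .
qed

lemma wN_lower: "real (n ^ (k+1)) \<le> real (((k+1)*n + k) choose (Suc k))"
proof (cases "n = 0")
  case True then show ?thesis by simp
next
  case False
  have le: "Suc k \<le> (k+1)*n + k" using False by (cases n) auto
  have "real n \<le> real ((k+1)*n + k) / real (Suc k)"
    by (simp add: field_simps)
  then have "real n ^ (Suc k) \<le> (real ((k+1)*n + k) / real (Suc k)) ^ (Suc k)"
    by (rule power_mono) simp
  also have "\<dots> \<le> real (((k+1)*n + k) choose (Suc k))"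
    by (rule binomial_ge_n_over_k_pow_k[OF le])
  finally show ?thesis by simp
qed


lemma dist_general:
  assumes m1: "1 \<le> m" and km: "k \<le> m" and mk: "m \<le> k + 1"
  shows "distortion m k \<simeq>\<^sub>d (\<lambda>n. n ^ (k + 1))"
proof -
  obtain c where c: "\<forall>u. valid_G m k u \<and> es u = 0 \<longrightarrow> hrep m k u (c * (length u + 1) ^ (k+1))"
    using upper_main[OF km mk] by blast
  have dGu: "\<exists>u. valid_G m k u \<and> length u = dG m k w \<and> eqG m k u w" if "valid_G m k w" for w
  proof -
    have "\<exists>n u. valid_G m k u \<and> length u = n \<and> eqG m k u w" using that eqG.refl by blast
    then show ?thesis unfolding dG_def by (rule LeastI_ex)
  qed
  have dH_le: "dH m k w \<le> length h" if "valid_H m k h" "eqG m k (subst m h) w" for w h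
    unfolding dH_def by (rule Least_le) (use that in blast)
  have dHu: "\<exists>h. valid_H m k h \<and> length h = dH m k w \<and> eqG m k (subst m h) w" if "inH m k w" for w
  proof -
    have "\<exists>n h. valid_H m k h \<and> length h = n \<and> eqG m k (subst m h) w" using that by (auto simp: inH_def)
    then show ?thesis unfolding dH_def by (rule LeastI_ex)
  qed
  have es_inH: "es w = 0" if iH: "inH m k w" for w
  proof -
    obtain h where "eqG m k (subst m h) w" using iH unfolding inH_def by blast
    then show ?thesis using es_eq[OF km] es_subst[OF km] by metis
  qed
  have dHb: "dH m k w \<le> c * (n + 1) ^ (k+1)" if w: "valid_G m k w" "inH m k w" "dG m k w \<le> n" for w n
  proof -
    obtain u where u: "valid_G m k u" "length u = dG m k w" "eqG m k u w" using dGu[OF w(1)] by blast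
    have "es u = 0" using es_eq[OF km u(3)] es_inH[OF w(2)] by simp
    then have "hrep m k u (c * (length u + 1) ^ (k+1))" using c u(1) by blast
    then obtain h where h: "valid_H m k h" "length h \<le> c * (length u + 1) ^ (k+1)" "eqG m k (subst m h) u"
      by (auto simp: hrep_def)
    have "dH m k w \<le> length h" using dH_le[OF h(1) eqG.trans[OF h(3) u(3)]] .
    also have "\<dots> \<le> c * (length u + 1) ^ (k+1)" by (rule h(2))
    also have "\<dots> \<le> c * (n + 1) ^ (k+1)" using u(2) w(3) by (intro mult_le_mono2 power_mono) auto
    finally show ?thesis .
  qed
  define X where "X n = {dH m k w | w. valid_G m k w \<and> inH m k w \<and> dG m k w \<le> n}" for n
  have D: "distortion m k n = Sup (X n)" for n by (simp add: distortion_def X_def)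
  have Xb: "x \<le> c * (n + 1) ^ (k+1)" if "x \<in> X n" for x n using that dHb by (auto simp: X_def)
  have Dub: "distortion m k n \<le> c * (n + 1) ^ (k+1)" for n
  proof (cases "X n = {}")
    case True then show ?thesis by (simp add: D)
  next
    case False then show ?thesis unfolding D by (rule cSup_least) (rule Xb)
  qed
  have bdd: "bdd_above (X n)" for n by (rule bdd_aboveI[of _ "c * (n + 1) ^ (k+1)"]) (rule Xb)
  have up: "distortion m k \<preceq>\<^sub>d (\<lambda>n. n ^ (k + 1))"
    unfolding preceq_def
  proof (intro exI[of _ "c + 1"] conjI allI)
    fix n
    have "distortion m k n \<le> c * (n + 1) ^ (k+1)" by (rule Dub)
    also have "\<dots> \<le> (c + 1) * ((c + 1) * n + (c + 1)) ^ (k+1)"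
    proof (intro mult_le_mono power_mono)
      show "n + 1 \<le> (c + 1) * n + (c + 1)" by (simp add: algebra_simps)
    qed auto
    finally show "distortion m k n \<le> (c + 1) * ((c + 1) * n + (c + 1)) ^ (k + 1) + (c + 1) * n + (c + 1)"
      by simp
  qed simp
  have low: "(\<lambda>n. n ^ (k + 1)) \<preceq>\<^sub>d distortion m k"
    unfolding preceq_def
  proof (intro exI[of _ "2 * (k + 1)"] conjI allI)
    fix n
    define C where "C = 2 * (k + 1)"
    define N where "N = (k + 1) * n"
    define w where "w = wN m k N"
    have vw: "valid_G m k w" using m1 by (auto simp: w_def wN_def valid_G_def gen_def ginv_def)
    have esr: "es (replicate N x) = int N * es [x]" for x
      by (induction N) (simp_all add: es_def algebra_simps)
    have ew: "es w = 0" by (simp add: w_def wN_def esr)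
    have iw: "inH m k w"
    proof -
      have "hrep m k w (c * (length w + 1) ^ (k+1))" using c vw ew by blast
      then show ?thesis by (auto simp: hrep_def inH_def)
    qed
    have "dG m k w \<le> length w" unfolding dG_def by (rule Least_le) (use vw in blast)
    also have "length w \<le> C * n + C" by (simp add: w_def wN_def N_def C_def)
    finally have dgw: "dG m k w \<le> C * n + C" .
    obtain h where h: "valid_H m k h" "length h = dH m k w" "eqG m k (subst m h) w" using dHu[OF iw] by blast
    have "ev m (subst m h) = ev m w" by (rule ev_eq[OF km h(3)])
    then have "\<bar>snd (ev m w) 1\<bar> \<le> real (length h)" using ev_subst[OF km h(1)] by simp
    moreover have "snd (ev m w) 1 = real ((N + k) choose (Suc k))" using ev_wN[OF m1] by (simp add: w_def)
    moreover have "real (n ^ (k+1)) \<le> real ((N + k) choose (Suc k))" using wN_lower by (simp add: N_def)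
    ultimately have "n ^ (k+1) \<le> dH m k w" using h(2) by linarith
    also have "dH m k w \<le> distortion m k (C * n + C)"
      unfolding D by (rule cSup_upper[OF _ bdd]) (use vw iw dgw in \<open>auto simp: X_def\<close>)
    also have "\<dots> \<le> C * distortion m k (C * n + C)" by (simp add: C_def)
    finally show "n ^ (k + 1) \<le> 2 * (k + 1) * distortion m k (2 * (k + 1) * n + 2 * (k + 1)) + 2 * (k + 1) * n + 2 * (k + 1)"
      by (simp add: C_def)
  qed simp
  show ?thesis using up low by (simp add: simeq_def)
qed

theorem lemma7p4:
  fixes m :: nat
  assumes "1 \<le> m"
  shows "distortion m m \<simeq>\<^sub>d (\<lambda>n. n ^ (m + 1)) \<and>
         distortion m (m - 1) \<simeq>\<^sub>d (\<lambda>n. n ^ m)"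
proof
  show "distortion m m \<simeq>\<^sub>d (\<lambda>n. n ^ (m + 1))" using dist_general[of m m] assms by simp
  have "distortion m (m - 1) \<simeq>\<^sub>d (\<lambda>n. n ^ (m - 1 + 1))" using dist_general[of m "m-1"] assms by simp
  then show "distortion m (m - 1) \<simeq>\<^sub>d (\<lambda>n. n ^ m)" using assms by simp
qed

end
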